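(* Let ${\cal C}$ be a semi-degenerate congruence-modular variety and $A\in{\cal C}$ a semiprime algebra. For any nonzero cardinal $\kappa$, the conditions $(iv)_{{\rm Con}(A)}$, $(4)_{\kappa,{\rm Con}(A)}$, $(4)_{<\infty,{\rm Con}(A)}$ and $(4)_{{\rm Con}(A)}$ are equivalent.
   Context: ${\cal C}$ semi-degenerate: no nontrivial member has a one-element subalgebra. ${\rm Con}(A)$: congruence lattice with bounds $\Delta_A,\nabla_A=A^2$; $[\cdot,\cdot]_A$: modular commutator. A congruence $\phi\ne\nabla_A$ is prime if $[\theta,\zeta]_A\subseteq\phi$ implies $\theta\subseteq\phi$ or $\zeta\subseteq\phi$. $\rho_A(\theta)$: intersection of all prime congruences containing $\theta$. $A$ semiprime: $\rho_A(\Delta_A)=\Delta_A$. For a bounded lattice $L$: ${\rm Ann}_L(U)=\{x\in L\mid x\wedge u=0\ \forall u\in U\}$, ${\rm Ann}_L(a)={\rm Ann}_L(\{a\})$, $(V]_L$ the ideal generated by $V$. $(iv)_L$: for all $a,b\in L$, ${\rm Ann}_L(a\wedge b)=({\rm Ann}_L(a)\cup{\rm Ann}_L(b)]_L$. $(4)_{\kappa,L}$: $(iv)_L$ holds and for each $U\subseteq L$ with $|U|\le\kappa$ there is $x\in L$ with ${\rm Ann}_L({\rm Ann}_L(U))={\rm Ann}_L(x)$; $(4)_{<\infty,L}$: the same for all finite $U$; $(4)_L$: the same for all $U\subseteq L$. *)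

theory Defs
  imports Main
begin

text \<open>A signature is given by an arity function ar on operation symbols of type 'f.
  An algebra of that signature is a carrier set S together with an interpretation F
  (F f xs is only relevant when length xs = ar f and set xs is contained in S).\<close>

datatype ('f, 'v) trm = Var 'v | App 'f "('f, 'v) trm list"

fun wf_trm :: "('f \<Rightarrow> nat) \<Rightarrow> ('f, 'v) trm \<Rightarrow> bool" where
  "wf_trm ar (Var v) = True"
| "wf_trm ar (App f ts) = (length ts = ar f \<and> (\<forall>t\<in>set ts. wf_trm ar t))"

primrec eval :: "('f \<Rightarrow> 'a list \<Rightarrow> 'a) \<Rightarrow> ('v \<Rightarrow> 'a) \<Rightarrow> ('f, 'v) trm \<Rightarrow> 'a" where
  "eval F \<rho> (Var v) = \<rho> v"
| "eval F \<rho> (App f ts) = F f (map (eval F \<rho>) ts)"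

definition algebra :: "('f \<Rightarrow> nat) \<Rightarrow> 'a set \<Rightarrow> ('f \<Rightarrow> 'a list \<Rightarrow> 'a) \<Rightarrow> bool" where
  "algebra ar S F \<longleftrightarrow> (\<forall>f xs. length xs = ar f \<and> set xs \<subseteq> S \<longrightarrow> F f xs \<in> S)"

text \<open>A variety is represented by a set E of identities (Birkhoff); membership is Mod(E).\<close>
definition model_of :: "('f \<Rightarrow> nat) \<Rightarrow> (('f, nat) trm \<times> ('f, nat) trm) set
    \<Rightarrow> 'a set \<Rightarrow> ('f \<Rightarrow> 'a list \<Rightarrow> 'a) \<Rightarrow> bool" where
  "model_of ar E S F \<longleftrightarrow> algebra ar S F \<and>
     (\<forall>(s, t)\<in>E. \<forall>\<rho>. range \<rho> \<subseteq> S \<longrightarrow> eval F \<rho> s = eval F \<rho> t)"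

definition Con :: "('f \<Rightarrow> nat) \<Rightarrow> 'a set \<Rightarrow> ('f \<Rightarrow> 'a list \<Rightarrow> 'a) \<Rightarrow> 'a rel set" where
  "Con ar S F = {\<theta>. equiv S \<theta> \<and>
     (\<forall>f xs ys. length xs = ar f \<and> length ys = ar f \<and> list_all2 (\<lambda>x y. (x, y) \<in> \<theta>) xs ys
        \<longrightarrow> (F f xs, F f ys) \<in> \<theta>)}"

definition cjoin :: "('f \<Rightarrow> nat) \<Rightarrow> 'a set \<Rightarrow> ('f \<Rightarrow> 'a list \<Rightarrow> 'a) \<Rightarrow> 'a rel \<Rightarrow> 'a rel \<Rightarrow> 'a rel" where
  "cjoin ar S F \<theta> \<zeta> = \<Inter>{\<phi> \<in> Con ar S F. \<theta> \<union> \<zeta> \<subseteq> \<phi>}"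

text \<open>Term condition C(alpha, beta; delta): variables Inl i are the alpha-variables,
  variables Inr j the beta-variables.\<close>
definition term_cond :: "('f \<Rightarrow> nat) \<Rightarrow> 'a set \<Rightarrow> ('f \<Rightarrow> 'a list \<Rightarrow> 'a)
    \<Rightarrow> 'a rel \<Rightarrow> 'a rel \<Rightarrow> 'a rel \<Rightarrow> bool" where
  "term_cond ar S F \<alpha> \<beta> \<delta> \<longleftrightarrow>
    (\<forall>(t :: ('f, nat + nat) trm) \<rho> \<rho>' \<sigma> \<sigma>'. wf_trm ar t \<longrightarrow>
       (\<forall>i. (\<rho> i, \<rho>' i) \<in> \<alpha>) \<longrightarrow> (\<forall>j. (\<sigma> j, \<sigma>' j) \<in> \<beta>) \<longrightarrow>
       (eval F (case_sum \<rho> \<sigma>) t, eval F (case_sum \<rho> \<sigma>') t) \<in> \<delta> \<longrightarrow>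
       (eval F (case_sum \<rho>' \<sigma>) t, eval F (case_sum \<rho>' \<sigma>') t) \<in> \<delta>)"

definition comm :: "('f \<Rightarrow> nat) \<Rightarrow> 'a set \<Rightarrow> ('f \<Rightarrow> 'a list \<Rightarrow> 'a) \<Rightarrow> 'a rel \<Rightarrow> 'a rel \<Rightarrow> 'a rel" where
  "comm ar S F \<alpha> \<beta> = \<Inter>{\<delta> \<in> Con ar S F. term_cond ar S F \<alpha> \<beta> \<delta>}"

definition prime_con :: "('f \<Rightarrow> nat) \<Rightarrow> 'a set \<Rightarrow> ('f \<Rightarrow> 'a list \<Rightarrow> 'a) \<Rightarrow> 'a rel \<Rightarrow> bool" where
  "prime_con ar S F \<phi> \<longleftrightarrow> \<phi> \<in> Con ar S F \<and> \<phi> \<noteq> S \<times> S \<and>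
     (\<forall>\<theta>\<in>Con ar S F. \<forall>\<zeta>\<in>Con ar S F. comm ar S F \<theta> \<zeta> \<subseteq> \<phi> \<longrightarrow> \<theta> \<subseteq> \<phi> \<or> \<zeta> \<subseteq> \<phi>)"

text \<open>rho_A(theta); the empty intersection is nabla_A.\<close>
definition rad :: "('f \<Rightarrow> nat) \<Rightarrow> 'a set \<Rightarrow> ('f \<Rightarrow> 'a list \<Rightarrow> 'a) \<Rightarrow> 'a rel \<Rightarrow> 'a rel" where
  "rad ar S F \<theta> = (S \<times> S) \<inter> \<Inter>{\<phi>. prime_con ar S F \<phi> \<and> \<theta> \<subseteq> \<phi>}"

definition semiprime :: "('f \<Rightarrow> nat) \<Rightarrow> 'a set \<Rightarrow> ('f \<Rightarrow> 'a list \<Rightarrow> 'a) \<Rightarrow> bool" where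
  "semiprime ar S F \<longleftrightarrow> rad ar S F (Id_on S) = Id_on S"

definition cm_variety :: "('f \<Rightarrow> nat) \<Rightarrow> (('f, nat) trm \<times> ('f, nat) trm) set \<Rightarrow> bool" where
  "cm_variety ar E \<longleftrightarrow>
    (\<forall>(S :: ('f, nat) trm set) F. model_of ar E S F \<longrightarrow>
       (\<forall>\<alpha>\<in>Con ar S F. \<forall>\<beta>\<in>Con ar S F. \<forall>\<gamma>\<in>Con ar S F. \<alpha> \<subseteq> \<gamma> \<longrightarrow>
          cjoin ar S F \<alpha> (\<beta> \<inter> \<gamma>) = cjoin ar S F \<alpha> \<beta> \<inter> \<gamma>))"

definition semi_degenerate :: "('f \<Rightarrow> nat) \<Rightarrow> (('f, nat) trm \<times> ('f, nat) trm) set \<Rightarrow> bool" where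
  "semi_degenerate ar E \<longleftrightarrow>
    (\<forall>(S :: ('f, nat) trm set) F. model_of ar E S F \<longrightarrow> (\<exists>x\<in>S. \<exists>y\<in>S. x \<noteq> y) \<longrightarrow>
       \<not> (\<exists>a\<in>S. \<forall>f. F f (replicate (ar f) a) = a))"

record 'x lat =
  lcar :: "'x set"
  lle :: "'x \<Rightarrow> 'x \<Rightarrow> bool"
  lmeet :: "'x \<Rightarrow> 'x \<Rightarrow> 'x"
  ljoin :: "'x \<Rightarrow> 'x \<Rightarrow> 'x"
  lbot :: "'x"

definition Ann :: "'x lat \<Rightarrow> 'x set \<Rightarrow> 'x set" where
  "Ann L U = {x \<in> lcar L. \<forall>u\<in>U. lmeet L x u = lbot L}"

definition lat_ideal :: "'x lat \<Rightarrow> 'x set \<Rightarrow> bool" where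
  "lat_ideal L I \<longleftrightarrow> I \<subseteq> lcar L \<and> lbot L \<in> I \<and>
     (\<forall>x\<in>I. \<forall>y\<in>lcar L. lle L y x \<longrightarrow> y \<in> I) \<and> (\<forall>x\<in>I. \<forall>y\<in>I. ljoin L x y \<in> I)"

definition gen_ideal :: "'x lat \<Rightarrow> 'x set \<Rightarrow> 'x set" where
  "gen_ideal L V = \<Inter>{I. lat_ideal L I \<and> V \<subseteq> I}"

definition cond_iv :: "'x lat \<Rightarrow> bool" where
  "cond_iv L \<longleftrightarrow> (\<forall>a\<in>lcar L. \<forall>b\<in>lcar L.
     Ann L {lmeet L a b} = gen_ideal L (Ann L {a} \<union> Ann L {b}))"

definition cond4_kappa :: "'x lat \<Rightarrow> 'k set \<Rightarrow> bool" where
  "cond4_kappa L K \<longleftrightarrow> cond_iv L \<and>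
     (\<forall>U. U \<subseteq> lcar L \<and> (card_of U, card_of K) \<in> ordLeq \<longrightarrow> (\<exists>x\<in>lcar L. Ann L (Ann L U) = Ann L {x}))"

definition cond4_fin :: "'x lat \<Rightarrow> bool" where
  "cond4_fin L \<longleftrightarrow> cond_iv L \<and>
     (\<forall>U. U \<subseteq> lcar L \<and> finite U \<longrightarrow> (\<exists>x\<in>lcar L. Ann L (Ann L U) = Ann L {x}))"

definition cond4 :: "'x lat \<Rightarrow> bool" where
  "cond4 L \<longleftrightarrow> cond_iv L \<and>
     (\<forall>U. U \<subseteq> lcar L \<longrightarrow> (\<exists>x\<in>lcar L. Ann L (Ann L U) = Ann L {x}))"

definition ConL :: "('f \<Rightarrow> nat) \<Rightarrow> 'a set \<Rightarrow> ('f \<Rightarrow> 'a list \<Rightarrow> 'a) \<Rightarrow> 'a rel lat" where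
  "ConL ar S F = \<lparr>lcar = Con ar S F, lle = (\<subseteq>), lmeet = (\<inter>), ljoin = cjoin ar S F,
     lbot = Id_on S\<rparr>"

end

theory Submission
  imports Defs
begin

lemma Con_equiv: "\<theta> \<in> Con ar S F \<Longrightarrow> equiv S \<theta>"
  by (simp add: Con_def)

lemma Con_sub: "\<theta> \<in> Con ar S F \<Longrightarrow> \<theta> \<subseteq> S \<times> S"
  by (auto simp: Con_def equiv_def refl_on_def)

lemma Con_compat: "\<theta> \<in> Con ar S F \<Longrightarrow> length xs = ar f \<Longrightarrow> length ys = ar f
  \<Longrightarrow> list_all2 (\<lambda>x y. (x, y) \<in> \<theta>) xs ys \<Longrightarrow> (F f xs, F f ys) \<in> \<theta>"
  by (simp add: Con_def)

lemma eval_compat: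
  assumes "\<theta> \<in> Con ar S F" "\<forall>v. (\<tau> v, \<tau>' v) \<in> \<theta>"
  shows "wf_trm ar t \<Longrightarrow> (eval F \<tau> t, eval F \<tau>' t) \<in> \<theta>"
proof (induction t)
  case (Var x)
  then show ?case using assms by simp
next
  case (App f ts)
  have "list_all2 (\<lambda>x y. (x, y) \<in> \<theta>) (map (eval F \<tau>) ts) (map (eval F \<tau>') ts)"
    using App by (auto simp: list_all2_conv_all_nth)
  then show ?case using App assms(1) by (auto intro: Con_compat)
qed

lemma Con_Inter:
  assumes ne: "\<Phi> \<noteq> {}" and sub: "\<Phi> \<subseteq> Con ar S F"
  shows "\<Inter>\<Phi> \<in> Con ar S F"
proof -
  have e: "\<And>\<phi>. \<phi> \<in> \<Phi> \<Longrightarrow> equiv S \<phi>" using sub by (auto dest: Con_equiv)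
  obtain \<phi>0 where p0: "\<phi>0 \<in> \<Phi>" using ne by blast
  have "equiv S (\<Inter>\<Phi>)"
    unfolding equiv_def refl_on_def sym_def trans_def
  proof (intro conjI allI impI ballI subsetI)
    fix p assume "p \<in> \<Inter>\<Phi>" hence "p \<in> \<phi>0" using p0 by blast
    thus "p \<in> S \<times> S" using e[OF p0] by (auto simp: equiv_def refl_on_def)
  next
    fix x assume "x \<in> S" thus "(x, x) \<in> \<Inter>\<Phi>" using e by (auto simp: equiv_def refl_on_def)
  next
    fix x y assume "(x, y) \<in> \<Inter>\<Phi>" thus "(y, x) \<in> \<Inter>\<Phi>"
      using e by (auto simp: equiv_def sym_def)
  next
    fix x y z assume "(x, y) \<in> \<Inter>\<Phi>" "(y, z) \<in> \<Inter>\<Phi>" thus "(x, z) \<in> \<Inter>\<Phi>"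
      using e unfolding equiv_def trans_def by blast
  qed
  moreover have "(F f xs, F f ys) \<in> \<Inter>\<Phi>" if "length xs = ar f" "length ys = ar f"
    "list_all2 (\<lambda>x y. (x, y) \<in> \<Inter>\<Phi>) xs ys" for f xs ys
  proof
    fix \<phi> assume p: "\<phi> \<in> \<Phi>"
    have "list_all2 (\<lambda>x y. (x, y) \<in> \<phi>) xs ys"
      using that(3) by (rule list_all2_mono) (use p in blast)
    thus "(F f xs, F f ys) \<in> \<phi>" using Con_compat[of \<phi> ar S F] p sub that by blast
  qed
  ultimately show ?thesis by (simp add: Con_def)
qed

lemma Con_Int: "a \<in> Con ar S F \<Longrightarrow> b \<in> Con ar S F \<Longrightarrow> a \<inter> b \<in> Con ar S F"
  using Con_Inter[of "{a, b}" ar S F] by simp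

lemma comm_sub:
  assumes a: "a \<in> Con ar S F" and b: "b \<in> Con ar S F"
  shows "comm ar S F a b \<subseteq> a \<inter> b"
proof -
  have tc: "term_cond ar S F a b (a \<inter> b)"
    unfolding term_cond_def
  proof (intro allI impI)
    fix t \<rho> \<rho>' \<sigma> \<sigma>'
    assume wf: "wf_trm ar t" and ra: "\<forall>i. (\<rho> i, \<rho>' i) \<in> a" and sb: "\<forall>j. (\<sigma> j, \<sigma>' j) \<in> b"
      and h: "(eval F (case_sum \<rho> \<sigma>) t, eval F (case_sum \<rho> \<sigma>') t) \<in> a \<inter> b"
    have Sa: "a \<subseteq> S \<times> S" and Sb: "b \<subseteq> S \<times> S" using a b by (auto dest: Con_sub)
    have ea: "equiv S a" and eb: "equiv S b" using a b by (auto dest: Con_equiv)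
    have \<rho>S: "\<rho>' i \<in> S" for i using ra Sa by blast
    have \<sigma>S: "\<sigma> j \<in> S" "\<sigma>' j \<in> S" for j using sb Sb by blast+
    have 1: "(eval F (case_sum \<rho>' \<sigma>) t, eval F (case_sum \<rho>' \<sigma>') t) \<in> b"
      apply (rule eval_compat[OF b _ wf])
      using sb \<rho>S eb by (auto simp: equiv_def refl_on_def split: sum.split)
    have 2: "(eval F (case_sum \<rho> \<sigma>) t, eval F (case_sum \<rho>' \<sigma>) t) \<in> a"
      apply (rule eval_compat[OF a _ wf])
      using ra \<sigma>S ea by (auto simp: equiv_def refl_on_def split: sum.split)
    have 3: "(eval F (case_sum \<rho> \<sigma>') t, eval F (case_sum \<rho>' \<sigma>') t) \<in> a"
      apply (rule eval_compat[OF a _ wf])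
      using ra \<sigma>S ea by (auto simp: equiv_def refl_on_def split: sum.split)
    have "(eval F (case_sum \<rho>' \<sigma>) t, eval F (case_sum \<rho>' \<sigma>') t) \<in> a"
      using 2 3 h ea unfolding equiv_def sym_def trans_def by blast
    then show "(eval F (case_sum \<rho>' \<sigma>) t, eval F (case_sum \<rho>' \<sigma>') t) \<in> a \<inter> b"
      using 1 by blast
  qed
  show ?thesis unfolding comm_def using tc Con_Int[OF a b] by blast
qed

lemma Id_sub_Con: "\<theta> \<in> Con ar S F \<Longrightarrow> Id_on S \<subseteq> \<theta>"
  by (auto simp: Con_def equiv_def refl_on_def)

lemma full_Con: "algebra ar S F \<Longrightarrow> S \<times> S \<in> Con ar S F"
proof -
  assume alg: "algebra ar S F"
  have "(F f xs, F f ys) \<in> S \<times> S" if "length xs = ar f" "length ys = ar f"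
    "list_all2 (\<lambda>x y. (x, y) \<in> S \<times> S) xs ys" for f xs ys
  proof -
    have "set xs \<subseteq> S" "set ys \<subseteq> S" using that(3)
      by (auto simp: list_all2_conv_all_nth in_set_conv_nth)
    thus ?thesis using alg that unfolding algebra_def by simp
  qed
  moreover have "equiv S (S \<times> S)" by (auto simp: equiv_def refl_on_def sym_def trans_def)
  ultimately show ?thesis unfolding Con_def by blast
qed

lemma Ann_ConL: "Ann (ConL ar S F) U = {x \<in> Con ar S F. \<forall>u\<in>U. x \<inter> u = Id_on S}"
  by (simp add: Ann_def ConL_def)

lemma key:
  assumes alg: "algebra ar S F" and sp: "semiprime ar S F" and U: "U \<subseteq> Con ar S F"
  shows "\<exists>x\<in>Con ar S F. Ann (ConL ar S F) (Ann (ConL ar S F) U) = Ann (ConL ar S F) {x}"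
proof -
  let ?A = "{x \<in> Con ar S F. \<forall>u\<in>U. x \<inter> u = Id_on S}"
  define P where "P = \<Inter>{\<phi> \<in> Con ar S F. \<Union>?A \<subseteq> \<phi>}"
  have PC: "P \<in> Con ar S F"
  proof -
    have "\<Union>?A \<subseteq> S \<times> S" using Con_sub[of _ ar S F] by blast
    hence "S \<times> S \<in> {\<phi> \<in> Con ar S F. \<Union>?A \<subseteq> \<phi>}" using full_Con[OF alg] by blast
    hence ne: "{\<phi> \<in> Con ar S F. \<Union>?A \<subseteq> \<phi>} \<noteq> {}" by blast
    show ?thesis unfolding P_def by (rule Con_Inter[OF ne]) blast
  qed
  have Asub: "x \<subseteq> P" if "x \<in> ?A" for x unfolding P_def using that by (intro Inter_greatest) blast
  have PA: "P \<inter> u = Id_on S" if u: "u \<in> U" for u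
  proof
    have uC: "u \<in> Con ar S F" using U u by blast
    show "Id_on S \<subseteq> P \<inter> u" using Id_sub_Con[OF PC] Id_sub_Con[OF uC] by blast
    have "P \<inter> u \<subseteq> rad ar S F (Id_on S)"
      unfolding rad_def
    proof (intro Int_greatest Inter_greatest)
      show "P \<inter> u \<subseteq> S \<times> S" using Con_sub[OF PC] by blast
      fix \<phi> assume "\<phi> \<in> {\<phi>. prime_con ar S F \<phi> \<and> Id_on S \<subseteq> \<phi>}"
      hence pr: "prime_con ar S F \<phi>" and idp: "Id_on S \<subseteq> \<phi>" by auto
      have \<phi>C: "\<phi> \<in> Con ar S F" using pr by (simp add: prime_con_def)
      show "P \<inter> u \<subseteq> \<phi>"
      proof (cases "\<exists>\<alpha>\<in>?A. \<not> \<alpha> \<subseteq> \<phi>")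
        case True
        then obtain \<alpha> where al: "\<alpha> \<in> ?A" "\<not> \<alpha> \<subseteq> \<phi>" by blast
        have "\<alpha> \<inter> u = Id_on S" using al u by blast
        moreover have aC: "\<alpha> \<in> Con ar S F" using al(1) by blast
        ultimately have "comm ar S F \<alpha> u \<subseteq> \<phi>" using comm_sub[OF aC uC] idp by simp
        moreover have "\<forall>\<theta>\<in>Con ar S F. \<forall>\<zeta>\<in>Con ar S F. comm ar S F \<theta> \<zeta> \<subseteq> \<phi> \<longrightarrow> \<theta> \<subseteq> \<phi> \<or> \<zeta> \<subseteq> \<phi>"
          using pr unfolding prime_con_def by blast
        ultimately have "\<alpha> \<subseteq> \<phi> \<or> u \<subseteq> \<phi>" using uC aC by blast
        hence "u \<subseteq> \<phi>" using al(2) by blast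
        then show ?thesis by blast
      next
        case False
        hence "\<Union>?A \<subseteq> \<phi>" by blast
        hence "P \<subseteq> \<phi>" unfolding P_def using \<phi>C by blast
        then show ?thesis by blast
      qed
    qed
    moreover have "rad ar S F (Id_on S) = Id_on S" using sp by (simp add: semiprime_def)
    ultimately show "P \<inter> u \<subseteq> Id_on S" by simp
  qed
  have PinA: "P \<in> ?A" using PC PA by blast
  have "Ann (ConL ar S F) (Ann (ConL ar S F) U) = Ann (ConL ar S F) {P}"
    unfolding Ann_ConL
  proof (intro set_eqI iffI)
    fix x assume "x \<in> {x \<in> Con ar S F. \<forall>u\<in>?A. x \<inter> u = Id_on S}"
    then show "x \<in> {x \<in> Con ar S F. \<forall>u\<in>{P}. x \<inter> u = Id_on S}" using PinA by blast
  next
    fix x assume x: "x \<in> {x \<in> Con ar S F. \<forall>u\<in>{P}. x \<inter> u = Id_on S}"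
    have "x \<inter> y = Id_on S" if y: "y \<in> ?A" for y
    proof
      show "x \<inter> y \<subseteq> Id_on S" using Asub[OF y] x by blast
      show "Id_on S \<subseteq> x \<inter> y" using x y by (auto dest: Id_sub_Con)
    qed
    then show "x \<in> {x \<in> Con ar S F. \<forall>u\<in>?A. x \<inter> u = Id_on S}" using x by blast
  qed
  then show ?thesis using PC by blast
qed

theorem proposition2p27:
  fixes ar :: "'f \<Rightarrow> nat"
    and E :: "(('f, nat) trm \<times> ('f, nat) trm) set"
    and S :: "'a set" and F :: "'f \<Rightarrow> 'a list \<Rightarrow> 'a"
    and K :: "'k set"
  assumes "\<forall>(s, t)\<in>E. wf_trm ar s \<and> wf_trm ar t"
    and "cm_variety ar E"
    and "semi_degenerate ar E"
    and "model_of ar E S F"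
    and "semiprime ar S F"
    and "K \<noteq> {}"
  shows "(cond_iv (ConL ar S F) \<longleftrightarrow> cond4_kappa (ConL ar S F) K)
       \<and> (cond4_kappa (ConL ar S F) K \<longleftrightarrow> cond4_fin (ConL ar S F))
       \<and> (cond4_fin (ConL ar S F) \<longleftrightarrow> cond4 (ConL ar S F))"
proof -
  have alg: "algebra ar S F" using assms(4) by (simp add: model_of_def)
  have k: "\<forall>U. U \<subseteq> lcar (ConL ar S F) \<longrightarrow>
      (\<exists>x\<in>lcar (ConL ar S F). Ann (ConL ar S F) (Ann (ConL ar S F) U) = Ann (ConL ar S F) {x})"
    using key[OF alg assms(5)] by (simp add: ConL_def)
  show ?thesis unfolding cond4_kappa_def cond4_fin_def cond4_def using k by blast
qed

end
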